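(* Let $H=\sum_{i=1}^d\epsilon_i|\epsilon_i\rangle\langle\epsilon_i|$ be a Hamiltonian on $\mathbb{C}^d$ with orthonormal eigenbasis $\{|\epsilon_i\rangle\}$ and $\epsilon_1\le\cdots\le\epsilon_d$. Let $X$ be a (true, unknown) density matrix and $p_i=\mathrm{tr}(|\epsilon_i\rangle\langle\epsilon_i|X)$, $i=1,\dots,d$, and let $$\Omega_{\mathcal{I}}=\{\omega\succeq0:\ \mathrm{tr}(\omega)=1,\ \mathrm{tr}(\omega|\epsilon_i\rangle\langle\epsilon_i|)=p_i\ \forall i\}.$$ Let $\rho^\ast=\sum_i p_i|\epsilon_i\rangle\langle\epsilon_i|$. Then $\rho^\ast\in\Omega_{\mathcal{I}}$, the ergotropy is minimized over $\Omega_{\mathcal{I}}$ at $\rho^\ast$, and $$\min_{\omega\in\Omega_{\mathcal{I}}}\mathcal{E}(\omega,H)=\mathcal{E}(\rho^\ast,H)=\sum_{i=1}^dp_i\epsilon_i-\sum_{i=1}^dp_i^{\downarrow}\epsilon_i=\mathcal{E}_{IC}(X),$$ where $(p_1^\downarrow,\dots,p_d^\downarrow)$ is the nonincreasing rearrangement of $(p_1,\dots,p_d)$.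
   Context: The ergotropy of a state $\rho$ with Hamiltonian $H$ is $\mathcal{E}(\rho,H)=\max_{U}\big[\mathrm{tr}(\rho H)-\mathrm{tr}(HU\rho U^\dagger)\big]$ over $d\times d$ unitaries $U$. The incoherent ergotropy $\mathcal{E}_{IC}(X)$ of a state $X$ is the ergotropy of its dephased state in the energy eigenbasis, i.e. $\mathcal{E}_{IC}(X)=\mathcal{E}\big(\sum_i\langle\epsilon_i|X|\epsilon_i\rangle\,|\epsilon_i\rangle\langle\epsilon_i|,H\big)$. *)

theory Defs
  imports "Jordan_Normal_Form.Matrix"
begin

text \<open>Complex d x d matrices are represented by JNF matrices in carrier_mat d d;
  vectors of C^d by complex vec in carrier_vec d. Indices run over 0..d-1.\<close>

definition mtrace :: "complex mat \<Rightarrow> complex" where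
  "mtrace A = (\<Sum>i<dim_row A. A $$ (i,i))"

definition adj :: "complex mat \<Rightarrow> complex mat" where
  "adj A = mat (dim_col A) (dim_row A) (\<lambda>(i,j). cnj (A $$ (j,i)))"

text \<open>Inner product, antilinear in the first argument: cinner u v = <u|v>.\<close>
definition cinner :: "complex vec \<Rightarrow> complex vec \<Rightarrow> complex" where
  "cinner u v = (\<Sum>i<dim_vec v. cnj (u $ i) * v $ i)"

definition proj :: "complex vec \<Rightarrow> complex mat" where
  "proj v = mat (dim_vec v) (dim_vec v) (\<lambda>(i,j). v $ i * cnj (v $ j))"

definition spectral_sum :: "nat \<Rightarrow> (nat \<Rightarrow> complex vec) \<Rightarrow> (nat \<Rightarrow> complex) \<Rightarrow> complex mat" where
  "spectral_sum d e c = mat d d (\<lambda>(a,b). \<Sum>k<d. c k * (e k $ a) * cnj (e k $ b))"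

definition unitary_mat :: "nat \<Rightarrow> complex mat \<Rightarrow> bool" where
  "unitary_mat d U \<longleftrightarrow> U \<in> carrier_mat d d \<and> U * adj U = 1\<^sub>m d \<and> adj U * U = 1\<^sub>m d"

definition psd :: "nat \<Rightarrow> complex mat \<Rightarrow> bool" where
  "psd d A \<longleftrightarrow> A \<in> carrier_mat d d \<and>
     (\<forall>v \<in> carrier_vec d. Im (cinner v (A *\<^sub>v v)) = 0 \<and> 0 \<le> Re (cinner v (A *\<^sub>v v)))"

definition density :: "nat \<Rightarrow> complex mat \<Rightarrow> bool" where
  "density d \<rho> \<longleftrightarrow> psd d \<rho> \<and> mtrace \<rho> = 1"

text \<open>Ergotropy: max over d x d unitaries of tr(rho H) - tr(H U rho U^dagger)
  (these traces are real for Hermitian H and rho; we take real parts).\<close>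
definition ergotropy :: "nat \<Rightarrow> complex mat \<Rightarrow> complex mat \<Rightarrow> real" where
  "ergotropy d \<rho> H = (SUP U \<in> {U. unitary_mat d U}.
      Re (mtrace (\<rho> * H)) - Re (mtrace (H * (U * \<rho> * adj U))))"

definition dephase :: "nat \<Rightarrow> (nat \<Rightarrow> complex vec) \<Rightarrow> complex mat \<Rightarrow> complex mat" where
  "dephase d e X = spectral_sum d e (\<lambda>i. cinner (e i) (X *\<^sub>v e i))"

definition incoherent_ergotropy ::
  "nat \<Rightarrow> (nat \<Rightarrow> complex vec) \<Rightarrow> complex mat \<Rightarrow> complex mat \<Rightarrow> real" where
  "incoherent_ergotropy d e H X = ergotropy d (dephase d e X) H"

definition decr_rearr :: "nat \<Rightarrow> (nat \<Rightarrow> real) \<Rightarrow> real list" where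
  "decr_rearr d p = rev (sort (map p [0..<d]))"

end

theory Submission
  imports Defs "Jordan_Normal_Form.Determinant" "HOL-Combinatorics.Permutations"
begin


lemma knapsack:
  fixes c p r :: "nat \<Rightarrow> real"
  assumes sig: "\<sigma> permutes {..<d}" and rp: "\<And>i. i < d \<Longrightarrow> r i = p (\<sigma> i)"
    and rmono: "\<And>i j. i \<le> j \<Longrightarrow> j < d \<Longrightarrow> r j \<le> r i"
    and c01: "\<And>k. k < d \<Longrightarrow> 0 \<le> c k \<and> c k \<le> 1"
    and csum: "(\<Sum>k<d. c k) = real (d - m)" and md: "m \<le> d"
  shows "(\<Sum>i\<in>{m..<d}. r i) \<le> (\<Sum>k<d. c k * p k)"
proof (cases "m = d")
  case True
  then have "\<forall>k\<in>{..<d}. c k = 0"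
    using csum c01 by (subst sum_nonneg_eq_0_iff[symmetric]) auto
  then show ?thesis using True by simp
next
  case False
  then have m: "m < d" using md by simp
  define t where "t = r m"
  have e1: "(\<Sum>k<d. c k * p k) = (\<Sum>k<d. c k * (p k - t)) + real (d - m) * t"
  proof -
    have "(\<Sum>k<d. c k * p k) = (\<Sum>k<d. c k * (p k - t)) + t * (\<Sum>k<d. c k)"
      by (simp add: algebra_simps sum.distrib sum_distrib_left sum_subtractf)
    then show ?thesis using csum by simp
  qed
  have e2: "(\<Sum>k<d. c k * (p k - t)) \<ge> (\<Sum>k<d. min 0 (p k - t))"
  proof (rule sum_mono)
    fix k assume "k \<in> {..<d}"
    then have "0 \<le> c k" "c k \<le> 1" using c01 by auto
    show "min 0 (p k - t) \<le> c k * (p k - t)"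
    proof (cases "p k \<ge> t")
      case True then show ?thesis using \<open>0 \<le> c k\<close> by simp
    next
      case False
      have "1 * (p k - t) \<le> c k * (p k - t)"
        using False \<open>c k \<le> 1\<close> by (intro mult_right_mono_neg) auto
      then show ?thesis by simp
    qed
  qed
  have "(\<Sum>k<d. min 0 (p k - t)) = (\<Sum>i<d. min 0 (p (\<sigma> i) - t))"
    using sum.reindex_bij_betw[OF permutes_imp_bij[OF sig], of "\<lambda>k. min 0 (p k - t)"] by simp
  also have "\<dots> = (\<Sum>i<d. min 0 (r i - t))" using rp by simp
  also have "\<dots> = (\<Sum>i<m. min 0 (r i - t)) + (\<Sum>i\<in>{m..<d}. min 0 (r i - t))"
    using md by (metis atLeast0LessThan sum.atLeastLessThan_concat zero_le)
  also have "(\<Sum>i<m. min 0 (r i - t)) = 0"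
    using rmono m by (auto simp: t_def intro!: sum.neutral)
  also have "(\<Sum>i\<in>{m..<d}. min 0 (r i - t)) = (\<Sum>i\<in>{m..<d}. r i - t)"
    using rmono by (auto simp: t_def intro!: sum.cong)
  also have "\<dots> = (\<Sum>i\<in>{m..<d}. r i) - real (d - m) * t"
    by (simp add: sum_subtractf)
  finally have e3: "(\<Sum>k<d. min 0 (p k - t)) = (\<Sum>i\<in>{m..<d}. r i) - real (d - m) * t" by simp
  show ?thesis using e1 e2 e3 by linarith
qed

lemma abel:
  fixes x eps :: "nat \<Rightarrow> real"
  assumes emono: "\<And>i j. i \<le> j \<Longrightarrow> j < d \<Longrightarrow> eps i \<le> eps j"
    and tails: "\<And>m. m \<le> d \<Longrightarrow> 0 \<le> (\<Sum>i\<in>{m..<d}. x i)"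
    and tot: "(\<Sum>i<d. x i) = 0"
  shows "0 \<le> (\<Sum>i<d. eps i * x i)"
proof (cases "d = 0")
  case True then show ?thesis by simp
next
  case False
  have claim: "eps n * (\<Sum>i\<in>{n..<d}. x i) \<le> (\<Sum>i\<in>{n..<d}. eps i * x i)" if "n \<le> d - 1" for n
    using that
  proof (induction n rule: inc_induct)
    case base
    have "{d - 1..<d} = {d-1}" using False by auto
    then show ?case by simp
  next
    case (step n)
    have split: "\<And>f. (\<Sum>i\<in>{n..<d}. f i) = f n + (\<Sum>i\<in>{Suc n..<d}. f i)"
      using step(2) False by (subst sum.atLeast_Suc_lessThan) auto
    have "eps n * (\<Sum>i\<in>{Suc n..<d}. x i) \<le> eps (Suc n) * (\<Sum>i\<in>{Suc n..<d}. x i)"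
      using tails[of "Suc n"] emono[of n "Suc n"] step(2) False
      by (intro mult_right_mono) auto
    then show ?case using step(3) unfolding split[of x] split[of "\<lambda>i. eps i * x i"]
      by (simp add: algebra_simps)
  qed
  have "eps 0 * (\<Sum>i\<in>{0..<d}. x i) \<le> (\<Sum>i\<in>{0..<d}. eps i * x i)" using claim[of 0] by simp
  then show ?thesis using tot by (simp add: atLeast0LessThan)
qed

lemma ds_rearr:
  fixes B :: "nat \<Rightarrow> nat \<Rightarrow> real" and eps p r :: "nat \<Rightarrow> real"
  assumes Bnn: "\<And>i k. i < d \<Longrightarrow> k < d \<Longrightarrow> 0 \<le> B i k"
    and row: "\<And>i. i < d \<Longrightarrow> (\<Sum>k<d. B i k) = 1"
    and col: "\<And>k. k < d \<Longrightarrow> (\<Sum>i<d. B i k) = 1"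
    and emono: "\<And>i j. i \<le> j \<Longrightarrow> j < d \<Longrightarrow> eps i \<le> eps j"
    and sig: "\<sigma> permutes {..<d}" and rp: "\<And>i. i < d \<Longrightarrow> r i = p (\<sigma> i)"
    and rmono: "\<And>i j. i \<le> j \<Longrightarrow> j < d \<Longrightarrow> r j \<le> r i"
  shows "(\<Sum>i<d. eps i * r i) \<le> (\<Sum>i<d. \<Sum>k<d. eps i * B i k * p k)"
proof -
  define x where "x i = (\<Sum>k<d. B i k * p k) - r i" for i
  have sr: "(\<Sum>i<d. r i) = (\<Sum>k<d. p k)"
    using sum.reindex_bij_betw[OF permutes_imp_bij[OF sig], of p] rp by simp
  have tot: "(\<Sum>i<d. x i) = 0"
  proof -
    have "(\<Sum>i<d. \<Sum>k<d. B i k * p k) = (\<Sum>k<d. \<Sum>i<d. B i k * p k)" by (rule sum.swap)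
    also have "\<dots> = (\<Sum>k<d. p k)" using col by (simp add: sum_distrib_right[symmetric])
    finally show ?thesis using sr by (simp add: x_def sum_subtractf)
  qed
  have tails: "0 \<le> (\<Sum>i\<in>{m..<d}. x i)" if md: "m \<le> d" for m
  proof -
    define c where "c k = (\<Sum>i\<in>{m..<d}. B i k)" for k
    have c01: "0 \<le> c k \<and> c k \<le> 1" if "k < d" for k
    proof
      show "0 \<le> c k" unfolding c_def using Bnn that by (intro sum_nonneg) auto
      have "c k \<le> (\<Sum>i<d. B i k)" unfolding c_def using Bnn that
        by (intro sum_mono2) auto
      then show "c k \<le> 1" using col that by simp
    qed
    have "(\<Sum>k<d. c k) = (\<Sum>i\<in>{m..<d}. \<Sum>k<d. B i k)" unfolding c_def by (rule sum.swap)
    also have "\<dots> = real (d - m)" using row by simp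
    finally have csum: "(\<Sum>k<d. c k) = real (d - m)" .
    have "(\<Sum>i\<in>{m..<d}. \<Sum>k<d. B i k * p k) = (\<Sum>k<d. c k * p k)"
      unfolding c_def by (subst sum.swap) (simp add: sum_distrib_right)
    then show ?thesis using knapsack[of \<sigma> d r p c m, OF sig rp rmono c01 csum md]
      by (simp add: x_def sum_subtractf)
  qed
  have "0 \<le> (\<Sum>i<d. eps i * x i)" by (rule abel[of d eps x, OF emono tails tot])
  then show ?thesis
    by (simp add: x_def algebra_simps sum_subtractf sum_distrib_left)
qed



lemma adj_dim[simp]: "dim_row (adj A) = dim_col A" "dim_col (adj A) = dim_row A"
  by (auto simp: adj_def)
lemma adj_carrier: "A \<in> carrier_mat n m \<Longrightarrow> adj A \<in> carrier_mat m n"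
  unfolding carrier_mat_def by simp
lemma adj_index[simp]: "i < dim_col A \<Longrightarrow> j < dim_row A \<Longrightarrow> adj A $$ (i,j) = cnj (A $$ (j,i))"
  by (auto simp: adj_def)

lemma adj_d[simp]: "A \<in> carrier_mat d d \<Longrightarrow> adj A \<in> carrier_mat d d"
  unfolding carrier_mat_def by simp
lemma mult_d[simp]: "A \<in> carrier_mat d d \<Longrightarrow> B \<in> carrier_mat d d \<Longrightarrow> A * B \<in> carrier_mat d d"
  by auto
lemma assoc_d: "A \<in> carrier_mat d d \<Longrightarrow> B \<in> carrier_mat d d \<Longrightarrow> C \<in> carrier_mat d d \<Longrightarrow> A * B * C = A * (B * C)"
  by auto

lemma adj_adj[simp]: "adj (adj A) = A"
  by (rule eq_matI) auto

lemma adj_mult: assumes "A \<in> carrier_mat n m" "B \<in> carrier_mat m k"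
  shows "adj (A * B) = adj B * adj A"
  using assms by (intro eq_matI) (auto simp: scalar_prod_def row_def col_def mult.commute)

lemma adj_mult_d: "A \<in> carrier_mat d d \<Longrightarrow> B \<in> carrier_mat d d \<Longrightarrow> adj (A * B) = adj B * adj A"
  by (rule adj_mult)

lemma adj_one[simp]: "adj (1\<^sub>m n) = 1\<^sub>m n"
  by (rule eq_matI) auto

lemma mtrace_comm: assumes "A \<in> carrier_mat n m" "B \<in> carrier_mat m n"
  shows "mtrace (A * B) = mtrace (B * A)"
proof -
  have "mtrace (A * B) = (\<Sum>i<n. \<Sum>k<m. A $$ (i,k) * B $$ (k,i))"
    using assms by (simp add: mtrace_def scalar_prod_def row_def col_def atLeast0LessThan)
  also have "\<dots> = (\<Sum>k<m. \<Sum>i<n. B $$ (k,i) * A $$ (i,k))"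
    by (subst sum.swap) (simp add: mult.commute)
  also have "\<dots> = mtrace (B * A)"
    using assms by (simp add: mtrace_def scalar_prod_def row_def col_def atLeast0LessThan)
  finally show ?thesis .
qed

lemma unitary_adj: "unitary_mat d U \<Longrightarrow> unitary_mat d (adj U)"
  by (auto simp: unitary_mat_def)

lemma unitary_mult: assumes "unitary_mat d U" "unitary_mat d V"
  shows "unitary_mat d (U * V)"
proof -
  have U: "U \<in> carrier_mat d d" and V: "V \<in> carrier_mat d d" using assms by (auto simp: unitary_mat_def)
  have "U * V * adj (U * V) = U * (V * adj V) * adj U"
    using U V by (simp add: adj_mult assoc_d)
  also have "\<dots> = 1\<^sub>m d" using assms U by (simp add: unitary_mat_def)
  finally have 1: "U * V * adj (U * V) = 1\<^sub>m d" .
  have "adj (U * V) * (U * V) = 1\<^sub>m d"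
    using mat_mult_left_right_inverse[of "U * V" d "adj (U * V)"] 1 U V by simp
  then show ?thesis using 1 U V by (simp add: unitary_mat_def)
qed

lemma unitary_one: "unitary_mat d (1\<^sub>m d)"
  by (simp add: unitary_mat_def)

lemma unitary_from_left: assumes "U \<in> carrier_mat d d" "adj U * U = 1\<^sub>m d"
  shows "unitary_mat d U"
  using assms mat_mult_left_right_inverse[of "adj U" d U] by (simp add: unitary_mat_def)

definition Emat :: "nat \<Rightarrow> (nat \<Rightarrow> complex vec) \<Rightarrow> complex mat" where
  "Emat d e = mat d d (\<lambda>(a,k). e k $ a)"

lemma Emat_carrier[simp]: "Emat d e \<in> carrier_mat d d"
  by (simp add: Emat_def)

lemma Emat_dim[simp]: "dim_row (Emat d e) = d" "dim_col (Emat d e) = d"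
  by (simp_all add: Emat_def)

lemma mat_diag_dims[simp]: "dim_row (mat_diag n f) = n" "dim_col (mat_diag n f) = n"
  by (simp_all add: mat_diag_def)

lemma Emat_index[simp]: "a < d \<Longrightarrow> k < d \<Longrightarrow> Emat d e $$ (a,k) = e k $ a"
  by (simp add: Emat_def)

lemma Emat_adj_mult:
  assumes e_dim: "\<And>i. i < d \<Longrightarrow> e i \<in> carrier_vec d"
    and e_orth: "\<And>i j. i < d \<Longrightarrow> j < d \<Longrightarrow> cinner (e i) (e j) = (if i = j then 1 else 0)"
  shows "adj (Emat d e) * Emat d e = 1\<^sub>m d"
proof (rule eq_matI)
  fix i j assume ij: "i < dim_row (1\<^sub>m d :: complex mat)" "j < dim_col (1\<^sub>m d :: complex mat)"
  then have "(adj (Emat d e) * Emat d e) $$ (i,j) = (\<Sum>a<d. cnj (e i $ a) * e j $ a)"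
    by (simp add: scalar_prod_def row_def col_def atLeast0LessThan)
  also have "\<dots> = cinner (e i) (e j)" using e_dim[of j] ij by (simp add: cinner_def)
  finally show "(adj (Emat d e) * Emat d e) $$ (i,j) = 1\<^sub>m d $$ (i,j)" using e_orth ij by simp
qed auto

lemma Emat_unitary:
  assumes e_dim: "\<And>i. i < d \<Longrightarrow> e i \<in> carrier_vec d"
    and e_orth: "\<And>i j. i < d \<Longrightarrow> j < d \<Longrightarrow> cinner (e i) (e j) = (if i = j then 1 else 0)"
  shows "unitary_mat d (Emat d e)"
  using unitary_from_left[OF Emat_carrier Emat_adj_mult[OF assms]] .

lemma spectral_sum_Emat:
  "spectral_sum d e c = Emat d e * mat_diag d c * adj (Emat d e)"
proof (rule eq_matI)
  fix a b assume ab: "a < dim_row (Emat d e * mat_diag d c * adj (Emat d e))"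
     "b < dim_col (Emat d e * mat_diag d c * adj (Emat d e))"
  have "Emat d e * mat_diag d c = mat d d (\<lambda>(i,j). Emat d e $$ (i,j) * c j)"
    by (rule mat_diag_mult_right) simp
  then show "spectral_sum d e c $$ (a, b) = (Emat d e * mat_diag d c * adj (Emat d e)) $$ (a, b)"
    using ab by (simp add: spectral_sum_def scalar_prod_def row_def col_def atLeast0LessThan mult.commute mult.left_commute)
qed (auto simp: spectral_sum_def)

lemma spectral_sum_carrier[simp]: "spectral_sum d e c \<in> carrier_mat d d"
  by (simp add: spectral_sum_def)

lemma spectral_sum_cong: "(\<And>k. k < d \<Longrightarrow> c k = c' k) \<Longrightarrow> spectral_sum d e c = spectral_sum d e c'"
  unfolding spectral_sum_def by (intro eq_matI) auto

lemma proj_carrier: "v \<in> carrier_vec d \<Longrightarrow> proj v \<in> carrier_mat d d"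
  unfolding carrier_mat_def carrier_vec_def proj_def by simp

lemma diag_forms:
  assumes e_dim: "\<And>i. i < d \<Longrightarrow> e i \<in> carrier_vec d"
    and w: "\<omega> \<in> carrier_mat d d" and i: "i < d"
  shows "cinner (e i) (\<omega> *\<^sub>v e i) = (adj (Emat d e) * \<omega> * Emat d e) $$ (i,i)"
    "mtrace (\<omega> * proj (e i)) = (adj (Emat d e) * \<omega> * Emat d e) $$ (i,i)"
    "mtrace (proj (e i) * \<omega>) = (adj (Emat d e) * \<omega> * Emat d e) $$ (i,i)"
proof -
  have ei: "dim_vec (e i) = d" using e_dim[OF i] by auto
  have R: "(adj (Emat d e) * \<omega> * Emat d e) $$ (i,i) = (\<Sum>b<d. (\<Sum>a<d. cnj (e i $ a) * \<omega> $$ (a,b)) * e i $ b)"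
    using w i by (simp add: scalar_prod_def row_def col_def atLeast0LessThan)
  also have "\<dots> = (\<Sum>a<d. \<Sum>b<d. cnj (e i $ a) * \<omega> $$ (a,b) * e i $ b)"
    by (subst sum.swap) (simp add: sum_distrib_right)
  finally have R': "(adj (Emat d e) * \<omega> * Emat d e) $$ (i,i) = (\<Sum>a<d. \<Sum>b<d. cnj (e i $ a) * \<omega> $$ (a,b) * e i $ b)" .
  show 1: "cinner (e i) (\<omega> *\<^sub>v e i) = (adj (Emat d e) * \<omega> * Emat d e) $$ (i,i)"
    unfolding R' using w ei by (simp add: cinner_def scalar_prod_def row_def atLeast0LessThan sum_distrib_left mult.assoc)
  show 2: "mtrace (\<omega> * proj (e i)) = (adj (Emat d e) * \<omega> * Emat d e) $$ (i,i)"
    unfolding R' using w ei by (simp add: mtrace_def proj_def scalar_prod_def row_def col_def atLeast0LessThan mult.commute mult.left_commute)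
  show "mtrace (proj (e i) * \<omega>) = (adj (Emat d e) * \<omega> * Emat d e) $$ (i,i)"
    using 2 mtrace_comm[OF proj_carrier[OF e_dim[OF i]] w] by simp
qed



definition Dg :: "nat \<Rightarrow> (nat \<Rightarrow> real) \<Rightarrow> complex mat" where
  "Dg d f = mat_diag d (\<lambda>k. complex_of_real (f k))"

lemma Dg_carrier[simp]: "Dg d f \<in> carrier_mat d d" by (simp add: Dg_def)

definition ergD :: "nat \<Rightarrow> (nat \<Rightarrow> real) \<Rightarrow> complex mat \<Rightarrow> real" where
  "ergD d eps A = (SUP W \<in> {W. unitary_mat d W}.
      Re (mtrace (A * Dg d eps)) - Re (mtrace (Dg d eps * (W * A * adj W))))"

lemma erg_reduce:
  assumes e_dim: "\<And>i. i < d \<Longrightarrow> e i \<in> carrier_vec d"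
    and e_orth: "\<And>i j. i < d \<Longrightarrow> j < d \<Longrightarrow> cinner (e i) (e j) = (if i = j then 1 else 0)"
    and H: "H = spectral_sum d e (\<lambda>k. complex_of_real (eps k))"
    and w: "\<omega> \<in> carrier_mat d d"
  shows "ergotropy d \<omega> H = ergD d eps (adj (Emat d e) * \<omega> * Emat d e)"
proof -
  define E where "E = Emat d e"
  define D where "D = Dg d eps"
  have E: "E \<in> carrier_mat d d" and D: "D \<in> carrier_mat d d" by (simp_all add: E_def D_def)
  have EU: "unitary_mat d E" unfolding E_def by (rule Emat_unitary[OF e_dim e_orth])
  then have EE1: "E * adj E = 1\<^sub>m d" and EE2: "adj E * E = 1\<^sub>m d" by (auto simp: unitary_mat_def)
  have canc: "E * (adj E * Y) = Y" if "Y \<in> carrier_mat d d" for Y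
  proof -
    have "E * (adj E * Y) = (E * adj E) * Y" using that E by (simp add: assoc_d[where d=d])
    then show ?thesis using EE1 that by simp
  qed
  have canc2: "adj E * (E * Y) = Y" if "Y \<in> carrier_mat d d" for Y
  proof -
    have "adj E * (E * Y) = (adj E * E) * Y" using that E by (simp add: assoc_d[where d=d])
    then show ?thesis using EE2 that by simp
  qed
  have HE: "H = E * D * adj E" unfolding H E_def D_def Dg_def by (rule spectral_sum_Emat)
  define w' where "w' = adj E * \<omega> * E"
  have t1: "mtrace (\<omega> * H) = mtrace (w' * D)"
  proof -
    have "mtrace (\<omega> * H) = mtrace ((\<omega> * E * D) * adj E)" using w E D by (simp add: HE assoc_d[where d=d])
    also have "\<dots> = mtrace (adj E * (\<omega> * E * D))" using w E D by (intro mtrace_comm) auto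
    also have "\<dots> = mtrace (w' * D)" using w E D by (simp add: w'_def assoc_d[where d=d])
    finally show ?thesis .
  qed
  have t2: "mtrace (H * (U * \<omega> * adj U)) = mtrace (D * ((adj E * U * E) * w' * adj (adj E * U * E)))"
    if U: "U \<in> carrier_mat d d" for U
  proof -
    have "mtrace (H * (U * \<omega> * adj U)) = mtrace (E * (D * (adj E * (U * (\<omega> * adj U)))))"
      using w E D U by (simp add: HE assoc_d[where d=d])
    also have "\<dots> = mtrace ((D * (adj E * (U * (\<omega> * adj U)))) * E)"
      using w E D U by (intro mtrace_comm) auto
    also have "\<dots> = mtrace (D * ((adj E * U * E) * w' * adj (adj E * U * E)))"
      using w E D U by (simp add: w'_def adj_mult_d[where d=d] assoc_d[where d=d] canc)
    finally show ?thesis .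
  qed
  define g where "g W = Re (mtrace (w' * D)) - Re (mtrace (D * (W * w' * adj W)))" for W
  have img: "(\<lambda>U. adj E * U * E) ` {U. unitary_mat d U} = {U. unitary_mat d U}"
  proof
    show "(\<lambda>U. adj E * U * E) ` {U. unitary_mat d U} \<subseteq> {U. unitary_mat d U}"
      using EU by (auto intro!: unitary_mult unitary_adj)
    show "{U. unitary_mat d U} \<subseteq> (\<lambda>U. adj E * U * E) ` {U. unitary_mat d U}"
    proof
      fix W assume W: "W \<in> {U. unitary_mat d U}"
      then have Wc: "W \<in> carrier_mat d d" by (auto simp: unitary_mat_def)
      have "W = adj E * (E * W * adj E) * E"
        using Wc E EE2 by (simp add: assoc_d[where d=d] canc canc2)
      moreover have "unitary_mat d (E * W * adj E)" using EU W by (auto intro!: unitary_mult unitary_adj)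
      ultimately show "W \<in> (\<lambda>U. adj E * U * E) ` {U. unitary_mat d U}" by blast
    qed
  qed
  have "ergotropy d \<omega> H = (SUP U \<in> {U. unitary_mat d U}. g (adj E * U * E))"
    unfolding ergotropy_def g_def using t1 t2 by (intro SUP_cong) (auto simp: unitary_mat_def)
  also have "\<dots> = (SUP W \<in> {U. unitary_mat d U}. g W)"
    by (subst img[symmetric]) (simp add: image_comp)
  also have "\<dots> = ergD d eps w'" unfolding ergD_def g_def D_def ..
  finally show ?thesis unfolding w'_def E_def .
qed



lemma trace_formula:
  assumes W: "W \<in> carrier_mat d d" and M: "M \<in> carrier_mat d d"
  shows "mtrace (Dg d eps * (W * M * adj W)) =
    (\<Sum>i<d. \<Sum>a<d. \<Sum>b<d. complex_of_real (eps i) * W $$ (i,a) * M $$ (a,b) * cnj (W $$ (i,b)))"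
proof -
  have X: "W * M * adj W \<in> carrier_mat d d" using W M by simp
  have "Dg d eps * (W * M * adj W) = mat d d (\<lambda>(i,j). complex_of_real (eps i) * (W * M * adj W) $$ (i,j))"
    unfolding Dg_def by (rule mat_diag_mult_left[OF X])
  then have "mtrace (Dg d eps * (W * M * adj W)) = (\<Sum>i<d. complex_of_real (eps i) * (W * M * adj W) $$ (i,i))"
    by (simp add: mtrace_def)
  also have "\<dots> = (\<Sum>i<d. complex_of_real (eps i) * (\<Sum>b<d. (\<Sum>a<d. W $$ (i,a) * M $$ (a,b)) * cnj (W $$ (i,b))))"
    using W M by (intro sum.cong refl) (simp add: scalar_prod_def row_def col_def atLeast0LessThan)
  also have "\<dots> = (\<Sum>i<d. \<Sum>b<d. \<Sum>a<d. complex_of_real (eps i) * W $$ (i,a) * M $$ (a,b) * cnj (W $$ (i,b)))"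
    by (simp add: sum_distrib_left sum_distrib_right mult.assoc)
  also have "\<dots> = (\<Sum>i<d. \<Sum>a<d. \<Sum>b<d. complex_of_real (eps i) * W $$ (i,a) * M $$ (a,b) * cnj (W $$ (i,b)))"
    by (intro sum.cong refl sum.swap)
  finally show ?thesis .
qed

lemma trace_diag:
  assumes W: "W \<in> carrier_mat d d"
  shows "mtrace (Dg d eps * (W * Dg d p * adj W)) =
    complex_of_real (\<Sum>i<d. \<Sum>k<d. eps i * (cmod (W $$ (i,k)))\<^sup>2 * p k)"
proof -
  have "mtrace (Dg d eps * (W * Dg d p * adj W)) =
    (\<Sum>i<d. \<Sum>a<d. \<Sum>b<d. complex_of_real (eps i) * W $$ (i,a) * Dg d p $$ (a,b) * cnj (W $$ (i,b)))"
    by (rule trace_formula[OF W Dg_carrier])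
  also have "\<dots> = (\<Sum>i<d. \<Sum>a<d. complex_of_real (eps i) * W $$ (i,a) * complex_of_real (p a) * cnj (W $$ (i,a)))"
  proof (intro sum.cong refl)
    fix i a assume a: "a \<in> {..<d}"
    have "(\<Sum>b<d. complex_of_real (eps i) * W $$ (i,a) * Dg d p $$ (a,b) * cnj (W $$ (i,b)))
       = (\<Sum>b<d. if b = a then complex_of_real (eps i) * W $$ (i,a) * complex_of_real (p a) * cnj (W $$ (i,a)) else 0)"
      using a by (intro sum.cong refl) (auto simp: Dg_def mat_diag_def)
    also have "\<dots> = complex_of_real (eps i) * W $$ (i,a) * complex_of_real (p a) * cnj (W $$ (i,a))"
      using a by simp
    finally show "(\<Sum>b<d. complex_of_real (eps i) * W $$ (i,a) * Dg d p $$ (a,b) * cnj (W $$ (i,b)))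
       = complex_of_real (eps i) * W $$ (i,a) * complex_of_real (p a) * cnj (W $$ (i,a))" .
  qed
  also have "\<dots> = (\<Sum>i<d. \<Sum>a<d. complex_of_real (eps i * (cmod (W $$ (i,a)))\<^sup>2 * p a))"
  proof (intro sum.cong refl)
    fix i a
    have "W $$ (i,a) * cnj (W $$ (i,a)) = complex_of_real ((cmod (W $$ (i,a)))\<^sup>2)"
      by (simp add: complex_norm_square[symmetric])
    then show "complex_of_real (eps i) * W $$ (i,a) * complex_of_real (p a) * cnj (W $$ (i,a)) =
      complex_of_real (eps i * (cmod (W $$ (i,a)))\<^sup>2 * p a)"
      by (metis (no_types, lifting) mult.commute mult.left_commute of_real_mult)
  qed
  also have "\<dots> = complex_of_real (\<Sum>i<d. \<Sum>k<d. eps i * (cmod (W $$ (i,k)))\<^sup>2 * p k)"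
    by simp
  finally show ?thesis .
qed

lemma unitary_rows:
  assumes U: "unitary_mat d W" and i: "i < d"
  shows "(\<Sum>k<d. (cmod (W $$ (i,k)))\<^sup>2) = 1"
proof -
  have W: "W \<in> carrier_mat d d" using U by (simp add: unitary_mat_def)
  have "(W * adj W) $$ (i,i) = 1" using U i by (simp add: unitary_mat_def)
  moreover have "(W * adj W) $$ (i,i) = (\<Sum>k<d. W $$ (i,k) * cnj (W $$ (i,k)))"
    using W i by (simp add: scalar_prod_def row_def col_def atLeast0LessThan)
  moreover have "\<dots> = complex_of_real (\<Sum>k<d. (cmod (W $$ (i,k)))\<^sup>2)"
    by (simp add: complex_norm_square[symmetric])
  ultimately show ?thesis by (metis of_real_eq_1_iff)
qed

lemma unitary_cols:
  assumes U: "unitary_mat d W" and k: "k < d"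
  shows "(\<Sum>i<d. (cmod (W $$ (i,k)))\<^sup>2) = 1"
proof -
  have W: "W \<in> carrier_mat d d" using U by (simp add: unitary_mat_def)
  have "(adj W * W) $$ (k,k) = 1" using U k by (simp add: unitary_mat_def)
  moreover have "(adj W * W) $$ (k,k) = (\<Sum>i<d. W $$ (i,k) * cnj (W $$ (i,k)))"
    using W k by (simp add: scalar_prod_def row_def col_def atLeast0LessThan mult.commute)
  moreover have "\<dots> = complex_of_real (\<Sum>i<d. (cmod (W $$ (i,k)))\<^sup>2)"
    by (simp add: complex_norm_square[symmetric])
  ultimately show ?thesis by (metis of_real_eq_1_iff)
qed

lemma L1:
  assumes U: "unitary_mat d W"
    and emono: "\<And>i j. i \<le> j \<Longrightarrow> j < d \<Longrightarrow> eps i \<le> eps j"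
    and sig: "\<sigma> permutes {..<d}" and rp: "\<And>i. i < d \<Longrightarrow> r i = p (\<sigma> i)"
    and rmono: "\<And>i j. i \<le> j \<Longrightarrow> j < d \<Longrightarrow> r j \<le> r i"
  shows "(\<Sum>i<d. eps i * r i) \<le> Re (mtrace (Dg d eps * (W * Dg d p * adj W)))"
proof -
  have W: "W \<in> carrier_mat d d" using U by (simp add: unitary_mat_def)
  have "(\<Sum>i<d. eps i * r i) \<le> (\<Sum>i<d. \<Sum>k<d. eps i * (cmod (W $$ (i,k)))\<^sup>2 * p k)"
    by (rule ds_rearr[where B="\<lambda>i k. (cmod (W $$ (i,k)))\<^sup>2" and d=d and eps=eps and \<sigma>=\<sigma> and r=r and p=p, OF _ unitary_rows[OF U] unitary_cols[OF U] emono sig rp rmono]) auto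
  then show ?thesis by (simp add: trace_diag[OF W])
qed

definition permmat :: "nat \<Rightarrow> (nat \<Rightarrow> nat) \<Rightarrow> complex mat" where
  "permmat d \<sigma> = mat d d (\<lambda>(i,k). if k = \<sigma> i then 1 else 0)"

lemma L2:
  assumes sig: "\<sigma> permutes {..<d}" and rp: "\<And>i. i < d \<Longrightarrow> r i = p (\<sigma> i)"
  shows "unitary_mat d (permmat d \<sigma>)"
    "Re (mtrace (Dg d eps * (permmat d \<sigma> * Dg d p * adj (permmat d \<sigma>)))) = (\<Sum>i<d. eps i * r i)"
proof -
  define P where "P = permmat d \<sigma>"
  have P: "P \<in> carrier_mat d d" by (simp add: P_def permmat_def)
  have sin: "\<sigma> i < d" if "i < d" for i using permutes_in_image[OF sig] that by auto
  have reidx: "(\<Sum>i<d. f (\<sigma> i)) = (\<Sum>j<d. f j)" for f :: "nat \<Rightarrow> complex"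
    using sum.reindex_bij_betw[OF permutes_imp_bij[OF sig], of f] by simp
  have "adj P * P = 1\<^sub>m d"
  proof (rule eq_matI)
    fix k l assume kl: "k < dim_row (1\<^sub>m d :: complex mat)" "l < dim_col (1\<^sub>m d :: complex mat)"
    have Pc: "cnj (P $$ (i,j)) = P $$ (i,j)" if "i < d" "j < d" for i j
      using that by (simp add: P_def permmat_def)
    have "(adj P * P) $$ (k,l) = (\<Sum>i<d. P $$ (i,k) * P $$ (i,l))"
      using kl P Pc by (simp add: scalar_prod_def row_def col_def atLeast0LessThan)
    also have "\<dots> = (\<Sum>i<d. (if k = \<sigma> i then 1 else 0) * (if l = \<sigma> i then 1 else 0))"
      using kl by (intro sum.cong refl) (simp add: P_def permmat_def)
    also have "\<dots> = (\<Sum>j<d. (if k = j then 1 else 0) * (if l = j then 1 else 0))"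
      by (rule reidx)
    also have "\<dots> = (\<Sum>j<d. if j = k then (if l = k then 1 else 0) else (0::complex))"
      by (intro sum.cong refl) auto
    also have "\<dots> = 1\<^sub>m d $$ (k,l)" using kl by simp
    finally show "(adj P * P) $$ (k,l) = 1\<^sub>m d $$ (k,l)" .
  qed (use P in auto)
  then show U: "unitary_mat d (permmat d \<sigma>)" using unitary_from_left[OF P] by (simp add: P_def)
  have "(\<Sum>i<d. \<Sum>k<d. eps i * (cmod (P $$ (i,k)))\<^sup>2 * p k) = (\<Sum>i<d. eps i * r i)"
  proof (intro sum.cong refl)
    fix i assume i: "i \<in> {..<d}"
    have "(\<Sum>k<d. eps i * (cmod (P $$ (i,k)))\<^sup>2 * p k) = (\<Sum>k<d. if k = \<sigma> i then eps i * p k else 0)"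
      using i by (intro sum.cong refl) (auto simp: P_def permmat_def)
    also have "\<dots> = eps i * r i" using i sin rp by simp
    finally show "(\<Sum>k<d. eps i * (cmod (P $$ (i,k)))\<^sup>2 * p k) = eps i * r i" .
  qed
  then show "Re (mtrace (Dg d eps * (permmat d \<sigma> * Dg d p * adj (permmat d \<sigma>)))) = (\<Sum>i<d. eps i * r i)"
    using trace_diag[OF P] by (simp add: P_def)
qed



lemma unitary_entry_le1:
  assumes U: "unitary_mat d W" and i: "i < d" and k: "k < d"
  shows "cmod (W $$ (i,k)) \<le> 1"
proof -
  have "(cmod (W $$ (i,k)))\<^sup>2 \<le> (\<Sum>k'<d. (cmod (W $$ (i,k')))\<^sup>2)"
    using k by (intro member_le_sum) auto
  then have "(cmod (W $$ (i,k)))\<^sup>2 \<le> 1\<^sup>2" using unitary_rows[OF U i] by simp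
  then show ?thesis by (rule power2_le_imp_le) simp
qed

lemma L4:
  assumes A: "A \<in> carrier_mat d d"
  shows "bdd_above ((\<lambda>W. Re (mtrace (A * Dg d eps)) - Re (mtrace (Dg d eps * (W * A * adj W)))) ` {W. unitary_mat d W})"
proof -
  define K where "K = (\<Sum>i<d. \<Sum>a<d. \<Sum>b<d. \<bar>eps i\<bar> * cmod (A $$ (a,b)))"
  show ?thesis
  proof (rule bdd_aboveI2[where M="Re (mtrace (A * Dg d eps)) + K"])
    fix W assume "W \<in> {W. unitary_mat d W}"
    then have U: "unitary_mat d W" by simp
    then have W: "W \<in> carrier_mat d d" by (simp add: unitary_mat_def)
    let ?t = "\<lambda>i a b. complex_of_real (eps i) * W $$ (i,a) * A $$ (a,b) * cnj (W $$ (i,b))"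
    have "- Re (mtrace (Dg d eps * (W * A * adj W))) \<le> cmod (mtrace (Dg d eps * (W * A * adj W)))"
      by (metis abs_Re_le_cmod abs_le_iff)
    also have "\<dots> = cmod (\<Sum>i<d. \<Sum>a<d. \<Sum>b<d. ?t i a b)" by (simp add: trace_formula[OF W A])
    also have "\<dots> \<le> (\<Sum>i<d. cmod (\<Sum>a<d. \<Sum>b<d. ?t i a b))" by (rule norm_sum)
    also have "\<dots> \<le> (\<Sum>i<d. \<Sum>a<d. cmod (\<Sum>b<d. ?t i a b))" by (intro sum_mono norm_sum)
    also have "\<dots> \<le> (\<Sum>i<d. \<Sum>a<d. \<Sum>b<d. cmod (?t i a b))" by (intro sum_mono norm_sum)
    also have "\<dots> \<le> K" unfolding K_def
    proof (intro sum_mono)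
      fix i a b assume i: "i \<in> {..<d}" and a: "a \<in> {..<d}" and b: "b \<in> {..<d}"
      have "cmod (?t i a b) = \<bar>eps i\<bar> * cmod (W $$ (i,a)) * cmod (A $$ (a,b)) * cmod (W $$ (i,b))"
        by (simp add: norm_mult)
      also have "\<dots> \<le> \<bar>eps i\<bar> * 1 * cmod (A $$ (a,b)) * 1"
        using unitary_entry_le1[OF U, of i a] unitary_entry_le1[OF U, of i b] i a b
        by (intro mult_mono) (auto simp: mult_nonneg_nonneg)
      finally show "cmod (?t i a b) \<le> \<bar>eps i\<bar> * cmod (A $$ (a,b))" by simp
    qed
    finally have "- Re (mtrace (Dg d eps * (W * A * adj W))) \<le> K" .
    then show "Re (mtrace (A * Dg d eps)) - Re (mtrace (Dg d eps * (W * A * adj W))) \<le> Re (mtrace (A * Dg d eps)) + K"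
      by simp
  qed
qed

lemma L3:
  assumes A: "A \<in> carrier_mat d d" and Ad: "\<And>k. k < d \<Longrightarrow> A $$ (k,k) = complex_of_real (p k)"
    and W0: "unitary_mat d W0"
  shows "\<exists>V. unitary_mat d V \<and> Re (mtrace (Dg d eps * (V * A * adj V))) \<le> Re (mtrace (Dg d eps * (W0 * Dg d p * adj W0)))"
proof -
  define T where "T V M = Re (mtrace (Dg d eps * (V * M * adj V)))" for V M
  define deph where "deph n = mat d d (\<lambda>(a,b). if a = b \<or> (n \<le> a \<and> n \<le> b) then A $$ (a,b) else 0)" for n
  have dc: "deph n \<in> carrier_mat d d" for n by (simp add: deph_def)
  have step: "\<exists>V. unitary_mat d V \<and> T V (deph n) \<le> T W (deph (Suc n))"
    if n: "n < d" and U: "unitary_mat d W" for n W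
  proof -
    have Wc: "W \<in> carrier_mat d d" using U by (simp add: unitary_mat_def)
    define s where "s a = (if a = n then -1 else 1 :: complex)" for a
    define S where "S = mat_diag d s"
    have Sc: "S \<in> carrier_mat d d" by (simp add: S_def)
    have adjS: "adj S = S" unfolding S_def by (rule eq_matI) (auto simp: mat_diag_def s_def)
    have "adj S * S = 1\<^sub>m d" unfolding adjS unfolding S_def mat_diag_diag
      by (subst mat_diag_one[symmetric]) (intro arg_cong[where f="mat_diag d"] ext, simp add: s_def)
    then have SU: "unitary_mat d S" by (rule unitary_from_left[OF Sc])
    have WS: "W * S = mat d d (\<lambda>(i,j). W $$ (i,j) * s j)"
      unfolding S_def by (rule mat_diag_mult_right[OF Wc])
    have WSc: "W * S \<in> carrier_mat d d" using Wc Sc by simp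
    let ?M = "deph n" and ?M' = "deph (Suc n)"
    have pw: "2 * (complex_of_real (eps i) * W $$ (i,a) * ?M' $$ (a,b) * cnj (W $$ (i,b))) =
       complex_of_real (eps i) * W $$ (i,a) * ?M $$ (a,b) * cnj (W $$ (i,b)) +
       complex_of_real (eps i) * (W * S) $$ (i,a) * ?M $$ (a,b) * cnj ((W * S) $$ (i,b))"
      if i: "i < d" and a: "a < d" and b: "b < d" for i a b
      using i a b n by (auto simp: WS deph_def s_def algebra_simps)
    have "2 * mtrace (Dg d eps * (W * ?M' * adj W)) =
       mtrace (Dg d eps * (W * ?M * adj W)) + mtrace (Dg d eps * ((W * S) * ?M * adj (W * S)))"
      unfolding trace_formula[OF Wc dc] trace_formula[OF WSc dc]
      by (simp add: sum_distrib_left sum.distrib[symmetric] pw)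
    then have avg: "2 * T W ?M' = T W ?M + T (W * S) ?M"
      unfolding T_def by (metis Re_complex_of_real mult_2 plus_complex.sel(1))
    show ?thesis
    proof (cases "T W ?M \<le> T W ?M'")
      case True then show ?thesis using U by blast
    next
      case False
      then have "T (W * S) ?M \<le> T W ?M'" using avg by linarith
      then show ?thesis using unitary_mult[OF U SU] by blast
    qed
  qed
  have ind: "\<forall>W. unitary_mat d W \<longrightarrow> (\<exists>V. unitary_mat d V \<and> T V A \<le> T W (deph n))"
    if "n \<le> d" for n
    using that
  proof (induction n)
    case 0
    have "deph 0 = A" using A by (intro eq_matI) (auto simp: deph_def)
    then show ?case by auto
  next
    case (Suc n)
    show ?case
    proof (intro allI impI)
      fix W assume U: "unitary_mat d W"
      obtain V1 where V1: "unitary_mat d V1" "T V1 (deph n) \<le> T W (deph (Suc n))"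
        using step[of n W] Suc.prems U by auto
      obtain V where V: "unitary_mat d V" "T V A \<le> T V1 (deph n)"
        using Suc.IH Suc.prems V1(1) by auto
      then show "\<exists>V. unitary_mat d V \<and> T V A \<le> T W (deph (Suc n))" using V1 by force
    qed
  qed
  have "deph d = Dg d p" using Ad by (intro eq_matI) (auto simp: deph_def Dg_def mat_diag_def)
  then show ?thesis using ind[of d] W0 unfolding T_def by auto
qed



lemma decr_props:
  "\<exists>\<sigma>. \<sigma> permutes {..<d} \<and> (\<forall>i<d. decr_rearr d p ! i = p (\<sigma> i)) \<and>
     (\<forall>i j. i \<le> j \<longrightarrow> j < d \<longrightarrow> decr_rearr d p ! j \<le> decr_rearr d p ! i)"
proof -
  define L where "L = map p [0..<d]"
  have ms: "mset (decr_rearr d p) = mset L" by (simp add: decr_rearr_def L_def)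
  obtain \<sigma> where sig: "\<sigma> permutes {..<length L}" and pl: "permute_list \<sigma> L = decr_rearr d p"
    using mset_eq_permutation[OF ms] by blast
  have lenL: "length L = d" by (simp add: L_def)
  have len: "length (decr_rearr d p) = d" by (simp add: decr_rearr_def)
  have 1: "\<forall>i<d. decr_rearr d p ! i = p (\<sigma> i)"
  proof (intro allI impI)
    fix i assume i: "i < d"
    have "\<sigma> i < d" using permutes_in_image[OF sig] i lenL by auto
    then show "decr_rearr d p ! i = p (\<sigma> i)"
      using permute_list_nth[OF sig, of i] i lenL pl by (simp add: L_def)
  qed
  have "sorted (rev (decr_rearr d p))" by (simp add: decr_rearr_def)
  then have 2: "\<forall>i j. i \<le> j \<longrightarrow> j < d \<longrightarrow> decr_rearr d p ! j \<le> decr_rearr d p ! i"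
    using sorted_rev_nth_mono len by metis
  show ?thesis using sig lenL 1 2 by auto
qed

lemma trace_A_D:
  assumes A: "A \<in> carrier_mat d d"
  shows "mtrace (A * Dg d eps) = (\<Sum>k<d. A $$ (k,k) * complex_of_real (eps k))"
proof -
  have "A * Dg d eps = mat d d (\<lambda>(i,j). A $$ (i,j) * complex_of_real (eps j))"
    unfolding Dg_def by (rule mat_diag_mult_right[OF A])
  then show ?thesis by (simp add: mtrace_def)
qed

lemma psd_spectral:
  assumes pnn: "\<And>k. k < d \<Longrightarrow> 0 \<le> p k"
  shows "psd d (spectral_sum d e (\<lambda>k. complex_of_real (p k)))"
  unfolding psd_def
proof (intro conjI ballI)
  show "spectral_sum d e (\<lambda>k. complex_of_real (p k)) \<in> carrier_mat d d" by simp
  fix v :: "complex vec" assume v: "v \<in> carrier_vec d"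
  define z where "z k = (\<Sum>b<d. cnj (e k $ b) * v $ b)" for k
  have "cinner v (spectral_sum d e (\<lambda>k. complex_of_real (p k)) *\<^sub>v v) =
     (\<Sum>a<d. cnj (v $ a) * (\<Sum>b<d. (\<Sum>k<d. complex_of_real (p k) * e k $ a * cnj (e k $ b)) * v $ b))"
    using v by (simp add: cinner_def spectral_sum_def scalar_prod_def row_def atLeast0LessThan)
  also have "\<dots> = (\<Sum>a<d. \<Sum>b<d. \<Sum>k<d. complex_of_real (p k) * (cnj (v $ a) * e k $ a) * (cnj (e k $ b) * v $ b))"
    by (simp add: sum_distrib_left sum_distrib_right mult_ac)
  also have "\<dots> = (\<Sum>k<d. \<Sum>a<d. \<Sum>b<d. complex_of_real (p k) * (cnj (v $ a) * e k $ a) * (cnj (e k $ b) * v $ b))"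
    by (subst sum.swap, subst (2) sum.swap, rule refl)
  also have "\<dots> = (\<Sum>k<d. complex_of_real (p k) * cnj (z k) * z k)"
    by (simp add: z_def sum_distrib_left sum_distrib_right mult_ac)
  also have "\<dots> = complex_of_real (\<Sum>k<d. p k * (cmod (z k))\<^sup>2)"
  proof -
    have pw: "complex_of_real (p k) * cnj (z k) * z k = complex_of_real (p k * (cmod (z k))\<^sup>2)" for k
    proof -
      have "complex_of_real (p k) * cnj (z k) * z k = complex_of_real (p k) * (z k * cnj (z k))"
        by (simp add: mult_ac)
      also have "\<dots> = complex_of_real (p k) * complex_of_real ((cmod (z k))\<^sup>2)"
        by (simp only: complex_norm_square)
      also have "\<dots> = complex_of_real (p k * (cmod (z k))\<^sup>2)" by (simp only: of_real_mult)
      finally show ?thesis .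
    qed
    show ?thesis by (simp only: of_real_sum pw)
  qed
  finally have eq: "cinner v (spectral_sum d e (\<lambda>k. complex_of_real (p k)) *\<^sub>v v) = complex_of_real (\<Sum>k<d. p k * (cmod (z k))\<^sup>2)" .
  show "Im (cinner v (spectral_sum d e (\<lambda>k. complex_of_real (p k)) *\<^sub>v v)) = 0" unfolding eq by simp
  show "0 \<le> Re (cinner v (spectral_sum d e (\<lambda>k. complex_of_real (p k)) *\<^sub>v v))" unfolding eq
    using pnn by (auto intro!: sum_nonneg)
qed



theorem lemma1:
  fixes d :: nat and e :: "nat \<Rightarrow> complex vec" and eps :: "nat \<Rightarrow> real"
    and H X :: "complex mat" and p :: "nat \<Rightarrow> real"
  assumes e_dim: "\<And>i. i < d \<Longrightarrow> e i \<in> carrier_vec d"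
    and e_orthonormal: "\<And>i j. i < d \<Longrightarrow> j < d \<Longrightarrow> cinner (e i) (e j) = (if i = j then 1 else 0)"
    and H_def: "H = spectral_sum d e (\<lambda>k. complex_of_real (eps k))"
    and eps_sorted: "\<And>i j. i \<le> j \<Longrightarrow> j < d \<Longrightarrow> eps i \<le> eps j"
    and X_density: "density d X"
    and p_def: "\<And>i. i < d \<Longrightarrow> complex_of_real (p i) = mtrace (proj (e i) * X)"
  shows "let \<Omega> = {\<omega>. psd d \<omega> \<and> mtrace \<omega> = 1 \<and>
                   (\<forall>i<d. mtrace (\<omega> * proj (e i)) = complex_of_real (p i))};
             \<rho> = spectral_sum d e (\<lambda>k. complex_of_real (p k))
         in \<rho> \<in> \<Omega> \<and>
            (\<forall>\<omega>\<in>\<Omega>. ergotropy d \<rho> H \<le> ergotropy d \<omega> H) \<and>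
            ergotropy d \<rho> H = (\<Sum>i<d. p i * eps i) - (\<Sum>i<d. decr_rearr d p ! i * eps i) \<and>
            ergotropy d \<rho> H = incoherent_ergotropy d e H X"
proof -
  define E where "E = Emat d e"
  have Ec: "E \<in> carrier_mat d d" by (simp add: E_def)
  have EU: "unitary_mat d E" unfolding E_def by (rule Emat_unitary[OF e_dim e_orthonormal])
  then have EE1: "E * adj E = 1\<^sub>m d" and EE2: "adj E * E = 1\<^sub>m d" by (auto simp: unitary_mat_def)
  have Xc: "X \<in> carrier_mat d d" using X_density by (simp add: density_def psd_def)
  have pX: "complex_of_real (p k) = (adj E * X * E) $$ (k,k)" if "k < d" for k
    using p_def[OF that] diag_forms(3)[where e=e and d=d, OF e_dim Xc that] by (simp add: E_def)
  have pci: "cinner (e k) (X *\<^sub>v e k) = complex_of_real (p k)" if "k < d" for k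
    using pX[OF that] diag_forms(1)[where e=e and d=d, OF e_dim Xc that] by (simp add: E_def)
  have pnn: "0 \<le> p k" if "k < d" for k
  proof -
    have "0 \<le> Re (cinner (e k) (X *\<^sub>v e k))"
      using X_density e_dim[OF that] by (simp add: density_def psd_def)
    then show ?thesis using pci[OF that] by simp
  qed
  have psum: "(\<Sum>k<d. complex_of_real (p k)) = 1"
  proof -
    have dr: "dim_row (adj E * X * E) = d" using Ec by simp
    have "(\<Sum>k<d. complex_of_real (p k)) = mtrace (adj E * X * E)"
      unfolding mtrace_def dr using pX by (intro sum.cong) auto
    also have "\<dots> = mtrace (adj E * (X * E))" using Ec Xc by (simp add: assoc_d[where d=d])
    also have "\<dots> = mtrace ((X * E) * adj E)" using Ec Xc by (intro mtrace_comm) auto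
    also have "\<dots> = mtrace X" using Ec Xc EE1 by (simp add: assoc_d[where d=d])
    also have "\<dots> = 1" using X_density by (simp add: density_def)
    finally show ?thesis .
  qed
  define \<rho> where "\<rho> = spectral_sum d e (\<lambda>k. complex_of_real (p k))"
  have \<rho>c: "\<rho> \<in> carrier_mat d d" by (simp add: \<rho>_def)
  have \<rho>E: "\<rho> = E * Dg d p * adj E" by (simp add: \<rho>_def E_def Dg_def spectral_sum_Emat)
  have \<rho>': "adj E * \<rho> * E = Dg d p"
  proof -
    have "adj E * \<rho> * E = (adj E * E) * Dg d p * (adj E * E)"
      unfolding \<rho>E using Ec by (simp add: assoc_d[where d=d])
    then show ?thesis using EE2 by (simp add: Dg_def)
  qed
  obtain \<sigma> where sall: "\<sigma> permutes {..<d} \<and> (\<forall>i<d. decr_rearr d p ! i = p (\<sigma> i)) \<and>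
     (\<forall>i j. i \<le> j \<longrightarrow> j < d \<longrightarrow> decr_rearr d p ! j \<le> decr_rearr d p ! i)"
    using decr_props[of d p] ..
  note sall3 = conjunct2[OF conjunct2[OF sall]]
  note sig = conjunct1[OF sall]
  note rp0 = conjunct1[OF conjunct2[OF sall]]
  note rmono0 = sall3
  define r where "r i = decr_rearr d p ! i" for i
  have rp: "\<And>i. i < d \<Longrightarrow> r i = p (\<sigma> i)" using rp0 by (simp add: r_def)
  have rmono: "\<And>i j. i \<le> j \<Longrightarrow> j < d \<Longrightarrow> r j \<le> r i" using rmono0 by (simp add: r_def)
  define val where "val = (\<Sum>i<d. p i * eps i) - (\<Sum>i<d. eps i * r i)"
  have eq\<rho>: "ergotropy d \<rho> H = ergD d eps (Dg d p)"
    using erg_reduce[where e=e and d=d and eps=eps and H=H, OF e_dim e_orthonormal H_def \<rho>c] \<rho>' by (simp add: E_def)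
  have trDp: "Re (mtrace (Dg d p * Dg d eps)) = (\<Sum>i<d. p i * eps i)"
    by (subst trace_A_D[OF Dg_carrier]) (simp add: Dg_def mat_diag_def)
  define P where "P = permmat d \<sigma>"
  have PU: "unitary_mat d P" and Pval: "Re (mtrace (Dg d eps * (P * Dg d p * adj P))) = (\<Sum>i<d. eps i * r i)"
    using L2(1)[where \<sigma>=\<sigma> and d=d and r=r and p=p, OF sig rp] L2(2)[where \<sigma>=\<sigma> and d=d and r=r and p=p and eps=eps, OF sig rp] by (simp_all add: P_def)
  have bddp: "bdd_above ((\<lambda>W. Re (mtrace (Dg d p * Dg d eps)) - Re (mtrace (Dg d eps * (W * Dg d p * adj W)))) ` {W. unitary_mat d W})"
    by (rule L4[OF Dg_carrier])
  have ergDp: "ergD d eps (Dg d p) = val"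
  proof (rule antisym)
    show "ergD d eps (Dg d p) \<le> val" unfolding ergD_def
    proof (rule cSUP_least)
      show "{W. unitary_mat d W} \<noteq> {}" using unitary_one by blast
      fix W assume "W \<in> {W. unitary_mat d W}"
      then have "(\<Sum>i<d. eps i * r i) \<le> Re (mtrace (Dg d eps * (W * Dg d p * adj W)))"
        using L1[where d=d and W=W and eps=eps and \<sigma>=\<sigma> and r=r and p=p, OF _ eps_sorted sig rp rmono] by simp
      then show "Re (mtrace (Dg d p * Dg d eps)) - Re (mtrace (Dg d eps * (W * Dg d p * adj W))) \<le> val"
        using trDp by (simp add: val_def)
    qed
    have "Re (mtrace (Dg d p * Dg d eps)) - Re (mtrace (Dg d eps * (P * Dg d p * adj P))) \<le> ergD d eps (Dg d p)"
      unfolding ergD_def by (rule cSUP_upper[OF _ bddp]) (use PU in simp)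
    then show "val \<le> ergD d eps (Dg d p)" using trDp Pval by (simp add: val_def)
  qed
  have mono: "ergotropy d \<rho> H \<le> ergotropy d \<omega> H"
    if w: "psd d \<omega>" "mtrace \<omega> = 1" "\<forall>i<d. mtrace (\<omega> * proj (e i)) = complex_of_real (p i)" for \<omega>
  proof -
    have wc: "\<omega> \<in> carrier_mat d d" using w by (simp add: psd_def)
    define w' where "w' = adj E * \<omega> * E"
    have w'c: "w' \<in> carrier_mat d d" using wc Ec by (simp add: w'_def)
    have w'd: "w' $$ (k,k) = complex_of_real (p k)" if "k < d" for k
      using diag_forms(2)[where e=e and d=d, OF e_dim wc that] w(3) that by (simp add: w'_def E_def)
    have eqw: "ergotropy d \<omega> H = ergD d eps w'"
      using erg_reduce[where e=e and d=d and eps=eps and H=H, OF e_dim e_orthonormal H_def wc] by (simp add: w'_def E_def)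
    obtain V where VU: "unitary_mat d V"
      and Vle: "Re (mtrace (Dg d eps * (V * w' * adj V))) \<le> Re (mtrace (Dg d eps * (P * Dg d p * adj P)))"
      using L3[where d=d and A=w' and p=p and eps=eps, OF w'c w'd PU] by blast
    have trw: "Re (mtrace (w' * Dg d eps)) = (\<Sum>i<d. p i * eps i)"
      using w'd by (simp add: trace_A_D[OF w'c])
    have "Re (mtrace (w' * Dg d eps)) - Re (mtrace (Dg d eps * (V * w' * adj V))) \<le> ergD d eps w'"
      unfolding ergD_def by (rule cSUP_upper[OF _ L4[OF w'c]]) (use VU in simp)
    then have "val \<le> ergD d eps w'" using trw Vle Pval by (simp add: val_def)
    then show ?thesis using eq\<rho> ergDp eqw by simp
  qed
  have \<rho>\<Omega>: "psd d \<rho> \<and> mtrace \<rho> = 1 \<and> (\<forall>i<d. mtrace (\<rho> * proj (e i)) = complex_of_real (p i))"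
  proof (intro conjI allI impI)
    show "psd d \<rho>" unfolding \<rho>_def by (rule psd_spectral) (rule pnn)
    have "mtrace \<rho> = mtrace (E * (Dg d p * adj E))" using Ec by (simp add: \<rho>E assoc_d[where d=d])
    also have "\<dots> = mtrace ((Dg d p * adj E) * E)" using Ec by (intro mtrace_comm) auto
    also have "\<dots> = mtrace (Dg d p)" using Ec EE2 by (simp add: assoc_d[where d=d] Dg_def)
    also have "\<dots> = (\<Sum>k<d. complex_of_real (p k))" by (simp add: mtrace_def Dg_def mat_diag_def)
    finally show "mtrace \<rho> = 1" using psum by simp
    fix i assume i: "i < d"
    have "mtrace (\<rho> * proj (e i)) = (adj E * \<rho> * E) $$ (i,i)"
      using diag_forms(2)[where e=e and d=d, OF e_dim \<rho>c i] by (simp only: E_def)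
    also have "\<dots> = Dg d p $$ (i,i)" by (simp only: \<rho>')
    also have "\<dots> = complex_of_real (p i)" using i by (simp add: Dg_def mat_diag_def)
    finally show "mtrace (\<rho> * proj (e i)) = complex_of_real (p i)" .
  qed
  have deph: "dephase d e X = \<rho>"
    unfolding dephase_def \<rho>_def by (rule spectral_sum_cong) (simp add: pci)
  have val': "val = (\<Sum>i<d. p i * eps i) - (\<Sum>i<d. decr_rearr d p ! i * eps i)"
    by (simp add: val_def r_def mult.commute)
  show ?thesis
    unfolding Let_def \<rho>_def[symmetric]
    using \<rho>\<Omega> mono eq\<rho> ergDp val' deph by (auto simp: incoherent_ergotropy_def)
qed

end
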